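(* Let $p\ge5$ and consider the white metallic tree $\mathcal W_\lambda$ under the leftmost assignment. Let $\nu$ be a node, $u$ its metallic code, and $w$ the metallic code of $\nu-1$ (empty if $\nu=1$). Then: (i) if $\nu$ is black, its signature is $1$ or $2$, and its $p-3$ sons in increasing order have metallic codes $w\,(h+1)$ for $h=1,\dots,p-4$, then $u\,0$; (ii) if $\nu$ is white with signature $0$, its $p-2$ sons in increasing order have codes $w\,h$ for $h=1,\dots,p-4$, then $u\,0$, then $u\,1$; (iii) if $\nu$ is white with signature $1$, its sons have codes $w\,(h+1)$ for $h=1,\dots,p-4$, then $u\,0$, then $u\,1$; (iv) if $\nu$ is white with signature $a\in\{2,\dots,p-3\}$, its sons have codes $w\,h$ for $h=1,\dots,p-3$, then $u\,0$.
   Context: Fix $p\ge5$. Metallic numbers: $m_{-1}=0$, $m_0=1$, $m_{n+2}=(p-2)m_{n+1}-m_n$. With $d=p-3$, $c=p-4$, the metallic code of a positive integer $n$ is the unique word $a_k\cdots a_0$ over $\{0,\dots,p-3\}$ with $a_k\ne0$, $n=\sum a_im_i$, containing no factor $d\,c^j\,d$ ($j\ge0$); the code of $0$ is empty; the signature of $n$ is the last digit $a_0$; $w\,e$ denotes $w$ followed by the digit $e$. White metallic tree under an assignment $\alpha$, $\mathcal W_\alpha$: nodes are the positive integers, black or white; root $1$ is white; nodes processed in increasing order, node $\nu$ receives $p-2$ sons if white and $p-3$ if black, namely the smallest unused integers in increasing order; the assignment gives the position of the unique black son among the sons, other sons being white. The leftmost assignment $\lambda$ puts the black son at position $1$ (the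 smallest son). *)

theory Defs
  imports Main
begin

fun met :: "nat \<Rightarrow> nat \<Rightarrow> int" where
  "met p 0 = 1"
| "met p (Suc 0) = int p - 2"
| "met p (Suc (Suc n)) = (int p - 2) * met p (Suc n) - met p n"

text \<open>Words are lists of digits written most significant first:
  the list [a_k, ..., a_0].  Appending a digit e is  w @ [e].\<close>
definition word_val :: "nat \<Rightarrow> nat list \<Rightarrow> int" where
  "word_val p ws = (\<Sum>i<length ws. int (ws ! (length ws - 1 - i)) * met p i)"

definition metallic_word :: "nat \<Rightarrow> nat list \<Rightarrow> bool" where
  "metallic_word p ws \<longleftrightarrow>
     (\<forall>a\<in>set ws. a \<le> p - 3) \<and> (ws \<noteq> [] \<longrightarrow> hd ws \<noteq> 0) \<and>
     \<not> (\<exists>xs ys j. ws = xs @ [p - 3] @ replicate j (p - 4) @ [p - 3] @ ys)"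

definition metallic_code :: "nat \<Rightarrow> nat \<Rightarrow> nat list" where
  "metallic_code p n = (THE ws. metallic_word p ws \<and> word_val p ws = int n)"

definition signature :: "nat \<Rightarrow> nat \<Rightarrow> nat" where
  "signature p n = last (metallic_code p n)"

text \<open>White metallic tree under an assignment alpha (alpha \<nu> = position, 1-based, of the
  black son among the sons of \<nu>).  Nodes are processed in increasing order and each takes
  the smallest unused integers, so the sons of each node form a contiguous block starting
  right after the block of the previous node.  tree_data p alpha n is the list
  [(first son of 1, black son of 1), ..., (first son of n, black son of n)].\<close>
primrec tree_data :: "nat \<Rightarrow> (nat \<Rightarrow> nat) \<Rightarrow> nat \<Rightarrow> (nat \<times> nat) list" where
  "tree_data p alpha 0 = []"
| "tree_data p alpha (Suc n) =
     (if n = 0 then [(2, 2 + alpha 1 - 1)]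
      else (let xs = tree_data p alpha n;
                f = fst (last xs) + (if n \<in> snd ` set xs then p - 3 else p - 2)
            in xs @ [(f, f + alpha (Suc n) - 1)]))"

definition is_black :: "nat \<Rightarrow> (nat \<Rightarrow> nat) \<Rightarrow> nat \<Rightarrow> bool" where
  "is_black p alpha \<nu> \<longleftrightarrow> \<nu> \<in> snd ` set (tree_data p alpha \<nu>)"

definition num_sons :: "nat \<Rightarrow> (nat \<Rightarrow> nat) \<Rightarrow> nat \<Rightarrow> nat" where
  "num_sons p alpha \<nu> = (if is_black p alpha \<nu> then p - 3 else p - 2)"

definition sons :: "nat \<Rightarrow> (nat \<Rightarrow> nat) \<Rightarrow> nat \<Rightarrow> nat list" where
  "sons p alpha \<nu> =
     (let f = fst (last (tree_data p alpha \<nu>)) in [f ..< f + num_sons p alpha \<nu>])"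

definition leftmost :: "nat \<Rightarrow> nat" where
  "leftmost \<nu> = 1"

end

theory Submission
  imports Defs
begin

fun sdc :: "nat \<Rightarrow> nat list \<Rightarrow> bool" where
  "sdc p [] = False"
| "sdc p (a # r) = (a = p - 3 \<or> (a = p - 4 \<and> sdc p r))"

fun vld :: "nat \<Rightarrow> nat list \<Rightarrow> bool" where
  "vld p [] = True"
| "vld p (a # r) = (a \<le> p - 3 \<and> vld p r \<and> \<not> (a = p - 3 \<and> sdc p r))"

fun M :: "nat \<Rightarrow> nat \<Rightarrow> int" where
  "M p 0 = 0"
| "M p (Suc n) = met p n"

fun V :: "nat \<Rightarrow> nat \<Rightarrow> nat list \<Rightarrow> int" where
  "V p k [] = 0"
| "V p k (a # r) = int a * M p (Suc k) + V p (Suc k) r"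

fun W :: "nat \<Rightarrow> nat list \<Rightarrow> int" where
  "W p [] = 0"
| "W p (a # w) = int a * M p (Suc (length w)) + W p w"

fun sc :: "nat \<Rightarrow> nat list \<Rightarrow> nat list" where
  "sc p [] = [1]"
| "sc p (a # r) = (if sdc p (a # r) then 0 # sc p r else (a + 1) # r)"

fun rc :: "nat \<Rightarrow> nat \<Rightarrow> nat list" where
  "rc p 0 = []"
| "rc p (Suc n) = sc p (rc p n)"

fun bk :: "nat list \<Rightarrow> bool" where
  "bk [] = False"
| "bk (e # t) = (e = (if t = [] \<or> (hd t \<le> 1 \<and> \<not> bk t) then 2 else 1))"

definition Dl :: "nat list \<Rightarrow> nat" where
  "Dl t = (if t = [] \<or> (hd t \<le> 1 \<and> \<not> bk t) then 2 else 1)"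

definition pat :: "nat \<Rightarrow> nat list \<Rightarrow> bool" where
  "pat p r \<longleftrightarrow> (\<exists>xs ys j. r = xs @ [p - 3] @ replicate j (p - 4) @ [p - 3] @ ys)"

lemma M_rec: "M p (Suc (Suc n)) = (int p - 2) * M p (Suc n) - M p n"
  by (cases n) auto

lemma V_rec: "V p (Suc (Suc k)) r = (int p - 2) * V p (Suc k) r - V p k r"
proof (induction r arbitrary: k)
  case Nil then show ?case by simp
next
  case (Cons a r)
  have "M p (Suc (Suc (Suc k))) = (int p - 2) * M p (Suc (Suc k)) - M p (Suc k)"
    by (rule M_rec)
  then show ?case using Cons[of "Suc k"] by (simp add: algebra_simps)
qed

lemma V_sum: "V p k r = (\<Sum>i<length r. int (r ! i) * met p (i + k))"
proof (induction r arbitrary: k)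
  case Nil then show ?case by simp
next
  case (Cons a r)
  have "(\<Sum>i<length (a # r). int ((a # r) ! i) * met p (i + k)) =
     int a * met p k + (\<Sum>i<length r. int (r ! i) * met p (Suc i + k))"
    by (simp only: length_Cons sum.lessThan_Suc_shift) simp
  then show ?case using Cons[of "Suc k"] by simp
qed

lemma word_val_V: "word_val p ws = V p 0 (rev ws)"
  unfolding word_val_def V_sum by (auto simp: rev_nth intro!: sum.cong)

lemma V_append: "V p k (r @ [a]) = V p k r + int a * M p (Suc (k + length r))"
  by (induction r arbitrary: k) auto

lemma W_V: "W p w = V p 0 (rev w)"
  by (induction w) (auto simp: V_append)


definition Fn :: "nat \<Rightarrow> nat \<Rightarrow> nat" where
  "Fn p n = fst (last (tree_data p leftmost n))"

lemma td_len: "length (tree_data p leftmost n) = n"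
  by (induction n) (auto simp: Let_def)

lemma td_snoc: "tree_data p leftmost (Suc n) = tree_data p leftmost n @ [(Fn p (Suc n), Fn p (Suc n))]"
  by (cases n) (auto simp: Let_def Fn_def leftmost_def)

lemma Fn_1: "Fn p (Suc 0) = 2" by (simp add: Fn_def leftmost_def)

lemma Fn_Suc: "n \<ge> 1 \<Longrightarrow> Fn p (Suc n) = Fn p n + (if n \<in> snd ` set (tree_data p leftmost n) then p - 3 else p - 2)"
  by (simp add: Fn_def Let_def leftmost_def)

lemma td_set: "snd ` set (tree_data p leftmost n) = Fn p ` {1..n}"
proof (induction n)
  case 0 then show ?case by simp
next
  case (Suc n)
  have "{1..Suc n} = insert (Suc n) {1..n}" by auto
  then show ?case using Suc by (simp only: td_snoc) auto
qed

lemma is_black_iff: "is_black p leftmost \<nu> \<longleftrightarrow> \<nu> \<in> Fn p ` {1..\<nu>}"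
  by (simp add: is_black_def td_set)

lemma sons_eq: "sons p leftmost \<nu> = [Fn p \<nu> ..< Fn p \<nu> + num_sons p leftmost \<nu>]"
  by (simp add: sons_def Fn_def Let_def)

definition T :: "nat \<Rightarrow> nat \<Rightarrow> int" where
  "T p n = V p 1 (rc p n)"

context
  fixes p :: nat
  assumes p5: "5 \<le> p"
begin

lemma M_mono_aux: "0 \<le> M p n \<and> M p n < M p (Suc n)"
proof (induction n)
  case 0 then show ?case by simp
next
  case (Suc n)
  have a: "(int p - 2) * M p (Suc n) \<ge> 3 * M p (Suc n)"
    using Suc p5 by (intro mult_right_mono) auto
  show ?case using Suc.IH a M_rec[of p n] by linarith
qed

lemma M_nonneg: "0 \<le> M p n" using M_mono_aux by blast
lemma M_step: "M p n < M p (Suc n)" using M_mono_aux by blast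
lemma M_pos: "0 < M p (Suc n)" using M_nonneg M_step by (meson le_less_trans)



lemma sdc_char: "sdc p r \<longleftrightarrow> (\<exists>j ys. r = replicate j (p - 4) @ [p - 3] @ ys)"
proof (induction r)
  case Nil then show ?case by simp
next
  case (Cons a r)
  have cd: "p - 4 \<noteq> p - 3" using p5 by simp
  show ?case
  proof
    assume "sdc p (a # r)"
    then have "a = p - 3 \<or> (a = p - 4 \<and> sdc p r)" by simp
    then show "\<exists>j ys. a # r = replicate j (p - 4) @ [p - 3] @ ys"
    proof
      assume "a = p - 3" then show ?thesis by (intro exI[of _ 0] exI[of _ r]) simp
    next
      assume "a = p - 4 \<and> sdc p r"
      then obtain j ys where "r = replicate j (p - 4) @ [p - 3] @ ys" "a = p - 4" using Cons by blast
      then show ?thesis by (intro exI[of _ "Suc j"] exI[of _ ys]) simp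
    qed
  next
    assume "\<exists>j ys. a # r = replicate j (p - 4) @ [p - 3] @ ys"
    then obtain j ys where h: "a # r = replicate j (p - 4) @ [p - 3] @ ys" by blast
    show "sdc p (a # r)"
    proof (cases j)
      case 0 then show ?thesis using h by simp
    next
      case (Suc j')
      then have "a = p - 4" "r = replicate j' (p - 4) @ [p - 3] @ ys" using h by auto
      then show ?thesis using Cons by auto
    qed
  qed
qed

lemma pat_Nil: "\<not> pat p []" unfolding pat_def by simp

lemma pat_Cons: "pat p (a # r) \<longleftrightarrow> (a = p - 3 \<and> sdc p r) \<or> pat p r"
proof
  assume "pat p (a # r)"
  then obtain xs ys j where h: "a # r = xs @ [p - 3] @ replicate j (p - 4) @ [p - 3] @ ys"
    unfolding pat_def by blast
  show "(a = p - 3 \<and> sdc p r) \<or> pat p r"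
  proof (cases xs)
    case Nil
    then have "a = p - 3" "r = replicate j (p - 4) @ [p - 3] @ ys" using h by auto
    then show ?thesis using sdc_char by blast
  next
    case (Cons x xs')
    then have "r = xs' @ [p - 3] @ replicate j (p - 4) @ [p - 3] @ ys" using h by auto
    then show ?thesis unfolding pat_def by blast
  qed
next
  assume "(a = p - 3 \<and> sdc p r) \<or> pat p r"
  then show "pat p (a # r)"
  proof
    assume "a = p - 3 \<and> sdc p r"
    then obtain j ys where "a = p - 3" "r = replicate j (p - 4) @ [p - 3] @ ys" using sdc_char by blast
    then have "a # r = [] @ [p - 3] @ replicate j (p - 4) @ [p - 3] @ ys" by simp
    then show ?thesis unfolding pat_def by blast
  next
    assume "pat p r"
    then obtain xs ys j where "r = xs @ [p - 3] @ replicate j (p - 4) @ [p - 3] @ ys"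
      unfolding pat_def by blast
    then have "a # r = (a # xs) @ [p - 3] @ replicate j (p - 4) @ [p - 3] @ ys" by simp
    then show ?thesis unfolding pat_def by blast
  qed
qed

lemma vld_char: "vld p r \<longleftrightarrow> (\<forall>a\<in>set r. a \<le> p - 3) \<and> \<not> pat p r"
  by (induction r) (auto simp: pat_Nil pat_Cons)

lemma pat_rev_imp: "pat p r \<Longrightarrow> pat p (rev r)"
proof -
  assume "pat p r"
  then obtain xs ys j where "r = xs @ [p - 3] @ replicate j (p - 4) @ [p - 3] @ ys"
    unfolding pat_def by blast
  then have "rev r = rev ys @ [p - 3] @ replicate j (p - 4) @ [p - 3] @ rev xs" by simp
  then show ?thesis unfolding pat_def by blast
qed

lemma pat_rev: "pat p (rev r) \<longleftrightarrow> pat p r"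
  using pat_rev_imp[of r] pat_rev_imp[of "rev r"] by auto

lemma vld_rev: "vld p (rev r) \<longleftrightarrow> vld p r"
  unfolding vld_char pat_rev by simp

lemma metallic_word_iff: "metallic_word p ws \<longleftrightarrow> vld p ws \<and> (ws \<noteq> [] \<longrightarrow> hd ws \<noteq> 0)"
  unfolding metallic_word_def vld_char pat_def by auto

lemma met_nonneg: "0 \<le> met p n" using M_nonneg[of "Suc n"] by simp

lemma W_nonneg: "0 \<le> W p w"
  by (induction w) (auto simp: met_nonneg)

lemma bound: "vld p w \<Longrightarrow> W p w \<le> M p (Suc (length w)) - 1 \<and>
   (\<not> sdc p w \<longrightarrow> W p w \<le> M p (Suc (length w)) - M p (length w) - 1)"
proof (induction w)
  case Nil then show ?case by simp
next
  case (Cons a w)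
  let ?n = "length w"
  let ?A = "M p (Suc ?n)"
  let ?B = "M p ?n"
  have IH: "W p w \<le> ?A - 1" "\<not> sdc p w \<longrightarrow> W p w \<le> ?A - ?B - 1" using Cons by auto
  have rec: "M p (Suc (Suc ?n)) = int p * ?A - 2 * ?A - ?B" using M_rec[of p ?n] by (simp add: algebra_simps)
  have AB: "?B \<le> ?A" using M_step less_imp_le by blast
  have A0: "0 \<le> ?A" using M_nonneg by blast
  have ad: "a \<le> p - 3" "\<not> (a = p - 3 \<and> sdc p w)" using Cons.prems by auto
  have W: "W p (a # w) = int a * ?A + W p w" by simp
  have p1: "W p (a # w) \<le> M p (Suc (Suc ?n)) - 1"
  proof (cases "a = p - 3")
    case True
    then have ia: "int a = int p - 3" using p5 by simp
    have "int a * ?A = int p * ?A - 3 * ?A" by (simp only: ia) (simp add: algebra_simps)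
    then show ?thesis using W IH ad True rec by linarith
  next
    case False
    then have "int a \<le> int p - 4" using ad p5 by simp
    then have "int a * ?A \<le> (int p - 4) * ?A" using A0 by (intro mult_right_mono) auto
    then have "int a * ?A \<le> int p * ?A - 4 * ?A" by (simp add: algebra_simps)
    then show ?thesis using W IH rec AB by linarith
  qed
  have p2: "\<not> sdc p (a # w) \<longrightarrow> W p (a # w) \<le> M p (Suc (Suc ?n)) - ?A - 1"
  proof
    assume ns: "\<not> sdc p (a # w)"
    show "W p (a # w) \<le> M p (Suc (Suc ?n)) - ?A - 1"
    proof (cases "a = p - 4")
      case True
      then have ia: "int a = int p - 4" "\<not> sdc p w" using p5 ns by auto
      have "int a * ?A = int p * ?A - 4 * ?A" by (simp only: ia) (simp add: algebra_simps)
      then show ?thesis using W IH rec ia by linarith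
    next
      case False
      then have "a \<noteq> p - 3" using ns by auto
      then have "int a \<le> int p - 5" using ad False p5 by simp
      then have "int a * ?A \<le> (int p - 5) * ?A" using A0 by (intro mult_right_mono) auto
      then have "int a * ?A \<le> int p * ?A - 5 * ?A" by (simp add: algebra_simps)
      then show ?thesis using W IH rec AB by linarith
    qed
  qed
  show ?case using p1 p2 by simp
qed

lemma uniq_same_len: "vld p w1 \<Longrightarrow> vld p w2 \<Longrightarrow> length w1 = length w2 \<Longrightarrow> W p w1 = W p w2 \<Longrightarrow> w1 = w2"
proof (induction w1 arbitrary: w2)
  case Nil then show ?case by simp
next
  case (Cons a x)
  then obtain b y where w2: "w2 = b # y" by (cases w2) auto
  let ?A = "M p (Suc (length x))"
  have ly: "length y = length x" using Cons w2 by simp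
  have vx: "vld p x" "vld p y" using Cons.prems w2 by auto
  have bx: "W p x \<le> ?A - 1" using bound[OF vx(1)] by blast
  have by': "W p y \<le> ?A - 1" using bound[OF vx(2)] ly by simp
  have x0: "0 \<le> W p x" "0 \<le> W p y" by (rule W_nonneg)+
  have A0: "0 \<le> ?A" using M_nonneg by blast
  have eq: "int a * ?A + W p x = int b * ?A + W p y" using Cons.prems w2 ly by simp
  have ab: "a = b"
  proof (rule ccontr)
    assume "a \<noteq> b"
    then have "a < b \<or> b < a" by arith
    then show False
    proof
      assume "a < b"
      then have "(int a + 1) * ?A \<le> int b * ?A" using A0 by (intro mult_right_mono) auto
      then show False using eq bx x0 by (simp add: algebra_simps)
    next
      assume "b < a"
      then have "(int b + 1) * ?A \<le> int a * ?A" using A0 by (intro mult_right_mono) auto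
      then show False using eq by' x0 by (simp add: algebra_simps)
    qed
  qed
  then have "W p x = W p y" using eq by simp
  then have "x = y" using Cons w2 ly by auto
  then show ?case using ab w2 by simp
qed

lemma W_pad: "W p (replicate k 0 @ w) = W p w" by (induction k) auto
lemma vld_pad: "vld p (replicate k 0 @ w) = vld p w"
proof (induction k)
  case (Suc k)
  have "sdc p (replicate k 0 @ w) \<Longrightarrow> k = 0" using p5 by (cases k) auto
  then show ?case using Suc p5 by (cases k) auto
qed simp

lemma metallic_unique_le:
  assumes "metallic_word p w1" "metallic_word p w2" "word_val p w1 = word_val p w2"
    "length w1 \<le> length w2"
  shows "w1 = w2"
proof -
  let ?k = "length w2 - length w1"
  have v: "vld p w1" "vld p w2" "w2 \<noteq> [] \<longrightarrow> hd w2 \<noteq> 0" using assms metallic_word_iff by auto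
  have "replicate ?k 0 @ w1 = w2"
    using v assms(3,4) by (intro uniq_same_len) (auto simp: vld_pad W_pad word_val_V W_V[symmetric])
  moreover have "?k = 0"
  proof (rule ccontr)
    assume "?k \<noteq> 0"
    then have "hd (replicate ?k 0 @ w1) = 0" by (cases ?k) auto
    then show False using v calculation \<open>?k \<noteq> 0\<close> by auto
  qed
  ultimately show ?thesis by simp
qed

lemma metallic_unique:
  "metallic_word p w1 \<Longrightarrow> metallic_word p w2 \<Longrightarrow> word_val p w1 = word_val p w2 \<Longrightarrow> w1 = w2"
  using metallic_unique_le[of w1 w2] metallic_unique_le[of w2 w1] by (cases "length w1 \<le> length w2") auto

lemma M1: "M p (Suc 0) = 1" by simp
lemma M2: "M p (Suc (Suc 0)) = int p - 2" by simp

lemma sc_props: "vld p r \<Longrightarrow> vld p (sc p r) \<and> V p 0 (sc p r) = V p 0 r + 1 \<and>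
   V p 1 (sc p r) = V p 1 r + (if sdc p r then int p - 3 else int p - 2)"
proof (induction r)
  case Nil then show ?case using p5 by simp
next
  case (Cons a r)
  have ad: "a \<le> p - 3" "vld p r" "\<not> (a = p - 3 \<and> sdc p r)" using Cons.prems by auto
  have IH: "vld p (sc p r)" "V p 0 (sc p r) = V p 0 r + 1"
     "V p 1 (sc p r) = V p 1 r + (if sdc p r then int p - 3 else int p - 2)" using Cons ad by auto
  show ?case
  proof (cases "sdc p (a # r)")
    case True
    then have s: "sc p (a # r) = 0 # sc p r" by simp
    have del: "(if sdc p r then int p - 3 else int p - 2) = int a + 1"
      using True ad p5 by auto
    have v: "vld p (0 # sc p r)" using IH p5 by simp
    have e0: "V p 0 (0 # sc p r) = V p 0 (a # r) + 1" using IH del by simp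
    have r1: "V p 2 (sc p r) = (int p - 2) * V p 1 (sc p r) - V p 0 (sc p r)"
      using V_rec[of p 0] by (simp add: numeral_2_eq_2)
    have r2: "V p 2 r = (int p - 2) * V p 1 r - V p 0 r"
      using V_rec[of p 0] by (simp add: numeral_2_eq_2)
    have e1: "V p 1 (0 # sc p r) = V p 2 (sc p r)" by (simp add: numeral_2_eq_2)
    have e2: "V p 1 (a # r) = int a * (int p - 2) + V p 2 r" by (simp add: numeral_2_eq_2)
    have "V p 1 (0 # sc p r) = V p 1 (a # r) + (int p - 3)"
      unfolding e1 e2 r1 r2 IH del by (simp add: algebra_simps)
    then show ?thesis using s v e0 True by simp
  next
    case False
    then have s: "sc p (a # r) = (a + 1) # r" by simp
    have "a \<noteq> p - 3" using False by auto
    then have v: "vld p ((a + 1) # r)" using ad False by auto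
    show ?thesis using s v False by (simp add: algebra_simps numeral_2_eq_2)
  qed
qed


lemma sc_ne: "sc p r \<noteq> []" by (cases r) auto

lemma sc_last: "r = [] \<or> last r \<noteq> 0 \<Longrightarrow> last (sc p r) \<noteq> 0"
proof (induction r)
  case Nil then show ?case by simp
next
  case (Cons a r)
  have h: "r = [] \<or> last r \<noteq> 0" using Cons.prems by (cases r) auto
  show ?case
  proof (cases "sdc p (a # r)")
    case True
    then show ?thesis using Cons.IH[OF h] sc_ne[of r] by simp
  next
    case False
    then show ?thesis using Cons.prems by (cases r) auto
  qed
qed

lemma hd_sc: "hd (sc p r) = 0 \<longleftrightarrow> sdc p r"
  by (cases r) auto

lemma rc_props: "vld p (rc p n) \<and> V p 0 (rc p n) = int n \<and> (rc p n = [] \<or> last (rc p n) \<noteq> 0)"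
proof (induction n)
  case 0 then show ?case by simp
next
  case (Suc n)
  then show ?case using sc_props[of "rc p n"] sc_last[of "rc p n"] by simp
qed

lemma V0_nonneg: "0 \<le> V p 0 r"
  using W_V[of p "rev r"] W_nonneg[of "rev r"] by simp

lemma metallic_rev: "vld p r \<Longrightarrow> r = [] \<or> last r \<noteq> 0 \<Longrightarrow> metallic_word p (rev r)"
  by (auto simp: metallic_word_iff vld_rev hd_rev)

lemma code_eq: "metallic_code p n = rev (rc p n)"
proof -
  have m: "metallic_word p (rev (rc p n))" and v: "word_val p (rev (rc p n)) = int n"
    using rc_props[of n] metallic_rev by (auto simp: word_val_V)
  show ?thesis unfolding metallic_code_def
  proof (rule the_equality)
    show "metallic_word p (rev (rc p n)) \<and> word_val p (rev (rc p n)) = int n" using m v by simp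
  next
    fix ws assume "metallic_word p ws \<and> word_val p ws = int n"
    then show "ws = rev (rc p n)" using m v metallic_unique by auto
  qed
qed

lemma code_unique: "vld p r \<Longrightarrow> r = [] \<or> last r \<noteq> 0 \<Longrightarrow> rc p (nat (V p 0 r)) = r"
proof -
  assume a: "vld p r" "r = [] \<or> last r \<noteq> 0"
  let ?k = "nat (V p 0 r)"
  have k: "int ?k = V p 0 r" using V0_nonneg by simp
  have "rev (rc p ?k) = rev r"
    using metallic_rev[OF a] rc_props[of ?k] metallic_rev[of "rc p ?k"] k
    by (intro metallic_unique) (auto simp: word_val_V)
  then show ?thesis by simp
qed

lemma code_of:
  assumes "vld p (h # s)" "last (h # s) \<noteq> 0" "int x = V p 0 (h # s)"
  shows "metallic_code p x = rev s @ [h]"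
proof -
  have "rc p (nat (V p 0 (h # s))) = h # s" using code_unique assms by blast
  then have "rc p x = h # s" using assms(3) by (metis nat_int)
  then show ?thesis by (simp add: code_eq)
qed

lemma V_le: "V p k r \<le> V p (Suc k) r"
proof (induction r arbitrary: k)
  case Nil then show ?case by simp
next
  case (Cons a r)
  have "int a * M p (Suc k) \<le> int a * M p (Suc (Suc k))"
    using M_step[of "Suc k"] by (intro mult_left_mono) auto
  then show ?case using Cons[of "Suc k"] by simp
qed

lemma Dl_cases: "Dl t = 1 \<or> Dl t = 2" by (simp add: Dl_def)
lemma bk_Cons: "bk (e # t) \<longleftrightarrow> e = Dl t" by (simp add: Dl_def)
lemma Dl_Cons: "Dl (e # t) = (if e \<le> 1 \<and> e \<noteq> Dl t then 2 else 1)"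
  by (simp add: Dl_def bk_Cons)

lemma bk_sdc: "sdc p r \<Longrightarrow> hd r \<le> 1 \<Longrightarrow> bk r"
proof (induction r)
  case Nil then show ?case by simp
next
  case (Cons a t)
  have "a = p - 4" "sdc p t" using Cons.prems p5 by auto
  moreover have "a \<le> 1" using Cons.prems(2) by simp
  ultimately have a1: "a = 1" using p5 by linarith
  have "t \<noteq> []" using \<open>sdc p t\<close> by auto
  moreover have "hd t \<le> 1 \<Longrightarrow> bk t" using Cons.IH \<open>sdc p t\<close> by blast
  ultimately have "Dl t = 1" by (auto simp: Dl_def)
  then show ?case using a1 bk_Cons by simp
qed

lemma consist: "Dl s + (if bk (sc p s) then p - 3 else p - 2) =
   (if sdc p s then p - 3 else p - 2) + Dl (sc p s)"
proof (cases "sdc p s")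
  case True
  then obtain a t where s: "s = a # t" by (cases s) auto
  then have sc: "sc p s = 0 # sc p t" using True by simp
  have "\<not> bk (sc p s)" using sc bk_Cons Dl_cases by (metis zero_neq_one zero_neq_numeral)
  moreover have "Dl (sc p s) = 2" using sc calculation by (simp add: Dl_def)
  moreover have "Dl s = 1" using bk_sdc[OF True] s by (auto simp: Dl_def)
  ultimately show ?thesis using True p5 by simp
next
  case False
  show ?thesis
  proof (cases s)
    case Nil then show ?thesis by (simp add: Dl_def)
  next
    case (Cons a t)
    then have sc: "sc p s = (a + 1) # t" using False by simp
    have nsd: "\<not> sdc p (a # t)" using False Cons by simp
    have b1: "bk ((a + 1) # t) \<longleftrightarrow> a + 1 = Dl t" by (rule bk_Cons)
    have d1: "Dl (a # t) = (if a \<le> 1 \<and> a \<noteq> Dl t then 2 else 1)" by (rule Dl_Cons)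
    have d2: "Dl ((a + 1) # t) = (if a + 1 \<le> 1 \<and> a + 1 \<noteq> Dl t then 2 else 1)" by (rule Dl_Cons)
    have key: "Dl (a # t) + (if bk ((a + 1) # t) then p - 3 else p - 2) =
        (p - 2) + Dl ((a + 1) # t)"
    proof (cases "Dl t = 1")
      case True
      then show ?thesis unfolding b1 d1 d2 using p5 by (cases "a = 0") auto
    next
      case False
      then have "Dl t = 2" using Dl_cases[of t] by simp
      then show ?thesis unfolding b1 d1 d2 using p5 by (cases "a = 0"; cases "a = 1") auto
    qed
    show ?thesis unfolding sc if_not_P[OF False] using key Cons by (simp only:)
  qed
qed


lemma T_Suc: "T p (Suc n) = T p n + (if sdc p (rc p n) then int p - 3 else int p - 2)"
  using sc_props[of "rc p n"] rc_props[of n] by (simp add: T_def)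

lemma rc_ne: "1 \<le> n \<Longrightarrow> rc p n \<noteq> []"
  using sc_ne by (cases n) auto

lemma V0_Cons: "V p 0 (a # r) = int a + V p 1 r" by simp

lemma black_char:
  assumes H: "\<forall>\<mu>. 1 \<le> \<mu> \<and> \<mu> \<le> \<nu> \<longrightarrow> int (Fn p \<mu>) = T p (\<mu> - 1) + int (Dl (rc p (\<mu> - 1)))"
    and nu1: "1 \<le> \<nu>"
  shows "\<nu> \<in> Fn p ` {1..\<nu>} \<longleftrightarrow> bk (rc p \<nu>)"
proof
  assume "\<nu> \<in> Fn p ` {1..\<nu>}"
  then obtain \<mu> where \<mu>: "1 \<le> \<mu>" "\<mu> \<le> \<nu>" "Fn p \<mu> = \<nu>" by auto
  let ?s = "rc p (\<mu> - 1)"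
  have e: "int \<nu> = T p (\<mu> - 1) + int (Dl ?s)" using H \<mu> by auto
  have vs: "vld p ?s" "?s = [] \<or> last ?s \<noteq> 0" using rc_props by auto
  have v: "vld p (Dl ?s # ?s)"
  proof -
    have "Dl ?s \<le> p - 3" using Dl_cases[of ?s] p5 by auto
    moreover have "\<not> (Dl ?s = p - 3 \<and> sdc p ?s)"
    proof
      assume a: "Dl ?s = p - 3 \<and> sdc p ?s"
      then have "?s \<noteq> []" by auto
      moreover have "Dl ?s = 2" using a Dl_cases[of ?s] p5 by auto
      ultimately have "hd ?s \<le> 1" "\<not> bk ?s" by (auto simp: Dl_def split: if_splits)
      then show False using bk_sdc a by blast
    qed
    ultimately show ?thesis using vs by simp
  qed
  have l: "last (Dl ?s # ?s) \<noteq> 0" using vs Dl_cases[of ?s] by auto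
  have "int \<nu> = V p 0 (Dl ?s # ?s)" using e by (simp add: T_def)
  then have "rc p \<nu> = Dl ?s # ?s" using code_unique[of "Dl ?s # ?s"] v l by (metis nat_int)
  then show "bk (rc p \<nu>)" using bk_Cons by (simp del: bk.simps)
next
  assume b: "bk (rc p \<nu>)"
  obtain e t where r: "rc p \<nu> = e # t" using rc_ne[OF nu1] by (cases "rc p \<nu>") auto
  have et: "e = Dl t" using b r bk_Cons by simp
  have rp: "vld p (e # t)" "last (e # t) \<noteq> 0" "V p 0 (e # t) = int \<nu>" using rc_props[of \<nu>] r by auto
  have vt: "vld p t" "t = [] \<or> last t \<noteq> 0" using rp by (auto split: if_splits)
  let ?k = "nat (V p 0 t)"
  have rk: "rc p ?k = t" using code_unique vt by blast
  have kv: "int ?k = V p 0 t" using V0_nonneg by simp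
  have nu: "int \<nu> = int e + V p 1 t" using rp(3) by simp
  have vle: "V p 0 t \<le> V p 1 t" using V_le[of 0 t] by simp
  have e1: "1 \<le> e" using et Dl_cases[of t] by auto
  have le: "Suc ?k \<le> \<nu>" using nu kv vle e1 by linarith
  have "int (Fn p (Suc ?k)) = T p ?k + int (Dl (rc p ?k))" using H le by auto
  then have "int (Fn p (Suc ?k)) = int \<nu>" using rk nu et by (simp add: T_def)
  then have "Fn p (Suc ?k) = \<nu>" by simp
  then show "\<nu> \<in> Fn p ` {1..\<nu>}" using le by (intro image_eqI[of _ _ "Suc ?k"]) auto
qed

lemma H_all: "1 \<le> n \<Longrightarrow> int (Fn p n) = T p (n - 1) + int (Dl (rc p (n - 1)))"
proof -
  have "\<forall>\<mu>. 1 \<le> \<mu> \<and> \<mu> \<le> n \<longrightarrow> int (Fn p \<mu>) = T p (\<mu> - 1) + int (Dl (rc p (\<mu> - 1)))" for n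
  proof (induction n)
    case 0 show ?case by simp
  next
    case (Suc n)
    have new: "int (Fn p (Suc n)) = T p n + int (Dl (rc p n))"
    proof (cases "n = 0")
      case True then show ?thesis by (simp add: Fn_1 T_def Dl_def)
    next
      case False
      then have n1: "1 \<le> n" by simp
      have b: "n \<in> Fn p ` {1..n} \<longleftrightarrow> bk (rc p n)" using black_char Suc.IH n1 by blast
      have Hn: "int (Fn p n) = T p (n - 1) + int (Dl (rc p (n - 1)))" using Suc.IH n1 by blast
      have rn: "rc p n = sc p (rc p (n - 1))" using n1 by (cases n) auto
      have Tn: "T p n = T p (n - 1) + (if sdc p (rc p (n - 1)) then int p - 3 else int p - 2)"
        using T_Suc[of "n - 1"] n1 by simp
      have c: "Dl (rc p (n - 1)) + (if bk (rc p n) then p - 3 else p - 2) =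
          (if sdc p (rc p (n - 1)) then p - 3 else p - 2) + Dl (rc p n)"
        using consist rn by simp
      have ci: "int (Dl (rc p (n - 1))) + (if bk (rc p n) then int p - 3 else int p - 2) =
          (if sdc p (rc p (n - 1)) then int p - 3 else int p - 2) + int (Dl (rc p n))"
        using arg_cong[OF c, of int] p5 by (auto split: if_splits)
      have "Fn p (Suc n) = Fn p n + (if bk (rc p n) then p - 3 else p - 2)"
        using Fn_Suc[OF n1] b td_set by simp
      then have "int (Fn p (Suc n)) = int (Fn p n) + (if bk (rc p n) then int p - 3 else int p - 2)"
        using p5 by auto
      then show ?thesis using Hn Tn ci by linarith
    qed
    then show ?case using Suc.IH le_Suc_eq by auto
  qed
  then show "1 \<le> n \<Longrightarrow> int (Fn p n) = T p (n - 1) + int (Dl (rc p (n - 1)))" by blast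
qed

lemma list_codes:
  assumes "length xs = k" "\<And>i. i < k \<Longrightarrow> f (F + i) = xs ! i"
  shows "map f [F..<F + k] = xs"
  using assms by (simp add: list_eq_iff_nth_eq)

lemma son_w:
  assumes "vld p (h # s)" "1 \<le> h" "s = [] \<or> last s \<noteq> 0" "int x = int h + V p 1 s"
  shows "metallic_code p x = rev s @ [h]"
  using assms by (intro code_of) auto

lemma son_u:
  assumes "vld p r" "r \<noteq> []" "last r \<noteq> 0" "h \<le> 1" "int x = int h + V p 1 r"
  shows "metallic_code p x = rev r @ [h]"
proof -
  have "vld p (h # r)" using assms p5 by auto
  then show ?thesis using assms by (intro code_of) auto
qed

lemma aux:
  assumes nu1: "1 \<le> \<nu>"
  shows
   "(is_black p leftmost \<nu> \<longrightarrow>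
       signature p \<nu> \<in> {1, 2} \<and>
       map (metallic_code p) (sons p leftmost \<nu>) =
         map (\<lambda>h. metallic_code p (\<nu> - 1) @ [h + 1]) [1..<p - 3] @ [metallic_code p \<nu> @ [0]])
  \<and> (\<not> is_black p leftmost \<nu> \<and> signature p \<nu> = 0 \<longrightarrow>
       map (metallic_code p) (sons p leftmost \<nu>) =
         map (\<lambda>h. metallic_code p (\<nu> - 1) @ [h]) [1..<p - 3] @ [metallic_code p \<nu> @ [0], metallic_code p \<nu> @ [1]])
  \<and> (\<not> is_black p leftmost \<nu> \<and> signature p \<nu> = 1 \<longrightarrow>
       map (metallic_code p) (sons p leftmost \<nu>) =
         map (\<lambda>h. metallic_code p (\<nu> - 1) @ [h + 1]) [1..<p - 3] @ [metallic_code p \<nu> @ [0], metallic_code p \<nu> @ [1]])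
  \<and> (\<not> is_black p leftmost \<nu> \<and> 2 \<le> signature p \<nu> \<and> signature p \<nu> \<le> p - 3 \<longrightarrow>
       map (metallic_code p) (sons p leftmost \<nu>) =
         map (\<lambda>h. metallic_code p (\<nu> - 1) @ [h]) [1..<p - 2] @ [metallic_code p \<nu> @ [0]])"
proof -
  let ?s = "rc p (\<nu> - 1)"
  let ?r = "rc p \<nu>"
  let ?w = "metallic_code p (\<nu> - 1)"
  let ?u = "metallic_code p \<nu>"
  let ?F = "Fn p \<nu>"
  have rn: "?r = sc p ?s" using nu1 by (cases \<nu>) auto
  have w: "?w = rev ?s" and u: "?u = rev ?r" by (simp_all add: code_eq)
  have rne: "?r \<noteq> []" using rc_ne nu1 by blast
  have sig: "signature p \<nu> = hd ?r" using rne by (simp add: signature_def code_eq last_rev)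
  have HF: "int ?F = V p 1 ?s + int (Dl ?s)" using H_all[OF nu1] by (simp add: T_def)
  have black: "is_black p leftmost \<nu> \<longleftrightarrow> bk ?r"
    unfolding is_black_iff using black_char H_all nu1 by blast
  have vs: "vld p ?s" "?s = [] \<or> last ?s \<noteq> 0" using rc_props by auto
  have vr: "vld p ?r" "last ?r \<noteq> 0" using rc_props rne by auto
  have Tr: "V p 1 ?r = V p 1 ?s + (if sdc p ?s then int p - 3 else int p - 2)"
    using T_Suc[of "\<nu> - 1"] nu1 by (simp add: T_def)
  have sons: "sons p leftmost \<nu> = [?F ..< ?F + (if bk ?r then p - 3 else p - 2)]"
    by (simp add: sons_eq num_sons_def black)
  have cw: "metallic_code p x = ?w @ [h]"
    if "vld p (h # ?s)" "1 \<le> h" "int x = int h + V p 1 ?s" for x h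
    using son_w[of h ?s x] that vs w by simp
  have cu: "metallic_code p x = ?u @ [h]"
    if "h \<le> 1" "int x = int h + V p 1 ?r" for x h
    using son_u[of ?r h x] that vr rne u by simp
  show ?thesis
  proof (intro conjI impI)
    assume B: "is_black p leftmost \<nu>"
    then have bk: "bk ?r" using black by simp
    obtain e t where et: "?r = e # t" using rne by (cases ?r) auto
    have eD: "e = Dl t" using bk et bk_Cons by simp
    have ns: "\<not> sdc p ?s"
    proof
      assume "sdc p ?s"
      then have "hd ?r = 0" using rn hd_sc by simp
      then show False using et eD Dl_cases[of t] by auto
    qed
    have D2: "Dl ?s = 2"
    proof (cases ?s)
      case Nil
      then show ?thesis by (simp add: Dl_def)
    next
      case (Cons a t')
      then have "?r = (a + 1) # t'" using rn ns by simp
      then have "a + 1 = Dl t'" using bk bk_Cons by simp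
      then show ?thesis using Cons Dl_cases[of t'] by (auto simp: Dl_Cons)
    qed
    show "signature p \<nu> \<in> {1, 2}" using sig et eD Dl_cases[of t] by auto
    have el: "metallic_code p (?F + i) = (if i < p - 4 then ?w @ [i + 2] else ?u @ [0])"
      if "i < p - 3" for i
    proof (cases "i < p - 4")
      case True
      have "vld p ((i + 2) # ?s)" using vs ns True by auto
      then have "metallic_code p (?F + i) = ?w @ [i + 2]" using HF D2 by (intro cw) auto
      then show ?thesis using True by simp
    next
      case False
      then have "i = p - 4" using that by simp
      then have "int (?F + i) = 0 + V p 1 ?r" using HF D2 Tr ns p5 by auto
      then show ?thesis using False cu[of 0 "?F + i"] by simp
    qed
    show "map (metallic_code p) (sons p leftmost \<nu>) =
         map (\<lambda>h. ?w @ [h + 1]) [1..<p - 3] @ [?u @ [0]]"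
    proof (unfold sons if_P[OF bk], rule list_codes)
      show "length (map (\<lambda>h. ?w @ [h + 1]) [1..<p - 3] @ [?u @ [0]]) = p - 3" using p5 by simp
      fix i assume i: "i < p - 3"
      show "metallic_code p (?F + i) = (map (\<lambda>h. ?w @ [h + 1]) [1..<p - 3] @ [?u @ [0]]) ! i"
      proof (cases "i < p - 4")
        case True then show ?thesis using el[OF i] by (simp add: nth_append)
      next
        case False then have "i = p - 4" using i by simp
        then show ?thesis using el[OF i] p5 by (simp add: nth_append)
      qed
    qed
  next
    assume W: "\<not> is_black p leftmost \<nu> \<and> signature p \<nu> = 0"
    then have bk: "\<not> bk ?r" and h0: "hd ?r = 0" using black sig by auto
    have sd: "sdc p ?s" using h0 rn hd_sc by simp
    have D1: "Dl ?s = 1"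
    proof -
      have "?s \<noteq> []" using sd by auto
      moreover have "hd ?s \<le> 1 \<Longrightarrow> bk ?s" using bk_sdc sd by blast
      ultimately show ?thesis by (auto simp: Dl_def)
    qed
    have el: "metallic_code p (?F + i) = (if i < p - 4 then ?w @ [i + 1] else if i = p - 4 then ?u @ [0] else ?u @ [1])"
      if "i < p - 2" for i
    proof (cases "i < p - 4")
      case True
      have "vld p ((i + 1) # ?s)" using vs True by auto
      then have "metallic_code p (?F + i) = ?w @ [i + 1]" using HF D1 by (intro cw) auto
      then show ?thesis using True by simp
    next
      case False
      then have "i = p - 4 \<or> i = p - 3" using that by auto
      then show ?thesis
      proof
        assume i: "i = p - 4"
        then have "int (?F + i) = 0 + V p 1 ?r" using HF D1 Tr sd p5 by auto
        then have "metallic_code p (?F + i) = ?u @ [0]" using cu[of 0 "?F + i"] by simp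
        moreover have "\<not> i < p - 4" using i by simp
        ultimately show ?thesis using i by simp
      next
        assume i: "i = p - 3"
        then have "int (?F + i) = 1 + V p 1 ?r" using HF D1 Tr sd p5 by auto
        then have "metallic_code p (?F + i) = ?u @ [1]" using cu[of 1 "?F + i"] by simp
        moreover have "\<not> i < p - 4" "i \<noteq> p - 4" using i p5 by auto
        ultimately show ?thesis by simp
      qed
    qed
    show "map (metallic_code p) (sons p leftmost \<nu>) =
         map (\<lambda>h. ?w @ [h]) [1..<p - 3] @ [?u @ [0], ?u @ [1]]"
    proof (unfold sons if_not_P[OF bk], rule list_codes)
      show "length (map (\<lambda>h. ?w @ [h]) [1..<p - 3] @ [?u @ [0], ?u @ [1]]) = p - 2" using p5 by simp
      fix i assume i: "i < p - 2"
      show "metallic_code p (?F + i) = (map (\<lambda>h. ?w @ [h]) [1..<p - 3] @ [?u @ [0], ?u @ [1]]) ! i"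
      proof (cases "i < p - 4")
        case True then show ?thesis using el[OF i] by (simp add: nth_append)
      next
        case False then have "i = p - 4 \<or> i = p - 3" using i by auto
        then show ?thesis
        proof
          assume i4: "i = p - 4"
          have ii: "\<not> i < p - 4" "i = p - 4" "i - (p - 4) = 0" using i4 p5 by auto
          show ?thesis using el[OF i] ii by (simp add: nth_append)
        next
          assume i3: "i = p - 3"
          have ii: "\<not> i < p - 4" "i \<noteq> p - 4" "i - (p - 4) = 1" using i3 p5 by auto
          show ?thesis using el[OF i] ii by (simp add: nth_append)
        qed
      qed
    qed
  next
    assume W: "\<not> is_black p leftmost \<nu> \<and> signature p \<nu> = 1"
    then have bk: "\<not> bk ?r" and h1: "hd ?r = 1" using black sig by auto
    have ns: "\<not> sdc p ?s"
    proof
      assume "sdc p ?s"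
      then have "hd ?r = 0" using rn hd_sc by simp
      then show False using h1 by simp
    qed
    have D2: "Dl ?s = 2"
    proof (cases ?s)
      case Nil
      then show ?thesis by (simp add: Dl_def)
    next
      case (Cons a t')
      then have "?r = (a + 1) # t'" using rn ns by simp
      then have "a = 0" using h1 by simp
      then show ?thesis using Cons Dl_cases[of t'] by (auto simp: Dl_Cons)
    qed
    have el: "metallic_code p (?F + i) = (if i < p - 4 then ?w @ [i + 2] else if i = p - 4 then ?u @ [0] else ?u @ [1])"
      if "i < p - 2" for i
    proof (cases "i < p - 4")
      case True
      have "vld p ((i + 2) # ?s)" using vs ns True by auto
      then have "metallic_code p (?F + i) = ?w @ [i + 2]" using HF D2 by (intro cw) auto
      then show ?thesis using True by simp
    next
      case False
      then have "i = p - 4 \<or> i = p - 3" using that by auto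
      then show ?thesis
      proof
        assume i: "i = p - 4"
        then have "int (?F + i) = 0 + V p 1 ?r" using HF D2 Tr ns p5 by auto
        then have "metallic_code p (?F + i) = ?u @ [0]" using cu[of 0 "?F + i"] by simp
        moreover have "\<not> i < p - 4" using i by simp
        ultimately show ?thesis using i by simp
      next
        assume i: "i = p - 3"
        then have "int (?F + i) = 1 + V p 1 ?r" using HF D2 Tr ns p5 by auto
        then have "metallic_code p (?F + i) = ?u @ [1]" using cu[of 1 "?F + i"] by simp
        moreover have "\<not> i < p - 4" "i \<noteq> p - 4" using i p5 by auto
        ultimately show ?thesis by simp
      qed
    qed
    show "map (metallic_code p) (sons p leftmost \<nu>) =
         map (\<lambda>h. ?w @ [h + 1]) [1..<p - 3] @ [?u @ [0], ?u @ [1]]"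
    proof (unfold sons if_not_P[OF bk], rule list_codes)
      show "length (map (\<lambda>h. ?w @ [h + 1]) [1..<p - 3] @ [?u @ [0], ?u @ [1]]) = p - 2" using p5 by simp
      fix i assume i: "i < p - 2"
      show "metallic_code p (?F + i) = (map (\<lambda>h. ?w @ [h + 1]) [1..<p - 3] @ [?u @ [0], ?u @ [1]]) ! i"
      proof (cases "i < p - 4")
        case True then show ?thesis using el[OF i] by (simp add: nth_append)
      next
        case False then have "i = p - 4 \<or> i = p - 3" using i by auto
        then show ?thesis
        proof
          assume i4: "i = p - 4"
          have ii: "\<not> i < p - 4" "i = p - 4" "i - (p - 4) = 0" using i4 p5 by auto
          show ?thesis using el[OF i] ii by (simp add: nth_append)
        next
          assume i3: "i = p - 3"
          have ii: "\<not> i < p - 4" "i \<noteq> p - 4" "i - (p - 4) = 1" using i3 p5 by auto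
          show ?thesis using el[OF i] ii by (simp add: nth_append)
        qed
      qed
    qed
  next
    assume W: "\<not> is_black p leftmost \<nu> \<and> 2 \<le> signature p \<nu> \<and> signature p \<nu> \<le> p - 3"
    then have bk: "\<not> bk ?r" and h2: "2 \<le> hd ?r" using black sig by auto
    have ns: "\<not> sdc p ?s"
    proof
      assume "sdc p ?s"
      then have "hd ?r = 0" using rn hd_sc by simp
      then show False using h2 by simp
    qed
    have D1: "Dl ?s = 1"
    proof (cases ?s)
      case Nil
      then have "?r = [1]" using rn by simp
      then show ?thesis using h2 by simp
    next
      case (Cons a t')
      then have ra: "?r = (a + 1) # t'" using rn ns by simp
      then have "a + 1 \<noteq> Dl t'" using bk bk_Cons by simp
      moreover have "1 \<le> a" using ra h2 by simp
      ultimately show ?thesis using Cons Dl_cases[of t'] by (auto simp: Dl_Cons)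
    qed
    have el: "metallic_code p (?F + i) = (if i < p - 3 then ?w @ [i + 1] else ?u @ [0])"
      if "i < p - 2" for i
    proof (cases "i < p - 3")
      case True
      have "vld p ((i + 1) # ?s)" using vs ns True by auto
      then have "metallic_code p (?F + i) = ?w @ [i + 1]" using HF D1 by (intro cw) auto
      then show ?thesis using True by simp
    next
      case False
      then have i: "i = p - 3" using that by auto
      then have "int (?F + i) = 0 + V p 1 ?r" using HF D1 Tr ns p5 by auto
      then show ?thesis using i cu[of 0 "?F + i"] by simp
    qed
    show "map (metallic_code p) (sons p leftmost \<nu>) =
         map (\<lambda>h. ?w @ [h]) [1..<p - 2] @ [?u @ [0]]"
    proof (unfold sons if_not_P[OF bk], rule list_codes)
      show "length (map (\<lambda>h. ?w @ [h]) [1..<p - 2] @ [?u @ [0]]) = p - 2" using p5 by simp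
      fix i assume i: "i < p - 2"
      show "metallic_code p (?F + i) = (map (\<lambda>h. ?w @ [h]) [1..<p - 2] @ [?u @ [0]]) ! i"
      proof (cases "i < p - 3")
        case True then show ?thesis using el[OF i] by (simp add: nth_append)
      next
        case False then have "i = p - 3" using i by simp
        then show ?thesis using el[OF i] p5 by (simp add: nth_append)
      qed
    qed
  qed
qed

end

theorem lemma8:
  fixes p \<nu> :: nat
  assumes "p \<ge> 5" and "\<nu> \<ge> 1"
  defines "u \<equiv> metallic_code p \<nu>" and "w \<equiv> metallic_code p (\<nu> - 1)"
  shows
   "(is_black p leftmost \<nu> \<longrightarrow>
       signature p \<nu> \<in> {1, 2} \<and>
       map (metallic_code p) (sons p leftmost \<nu>) =
         map (\<lambda>h. w @ [h + 1]) [1..<p - 3] @ [u @ [0]])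
  \<and> (\<not> is_black p leftmost \<nu> \<and> signature p \<nu> = 0 \<longrightarrow>
       map (metallic_code p) (sons p leftmost \<nu>) =
         map (\<lambda>h. w @ [h]) [1..<p - 3] @ [u @ [0], u @ [1]])
  \<and> (\<not> is_black p leftmost \<nu> \<and> signature p \<nu> = 1 \<longrightarrow>
       map (metallic_code p) (sons p leftmost \<nu>) =
         map (\<lambda>h. w @ [h + 1]) [1..<p - 3] @ [u @ [0], u @ [1]])
  \<and> (\<not> is_black p leftmost \<nu> \<and> 2 \<le> signature p \<nu> \<and> signature p \<nu> \<le> p - 3 \<longrightarrow>
       map (metallic_code p) (sons p leftmost \<nu>) =
         map (\<lambda>h. w @ [h]) [1..<p - 2] @ [u @ [0]])"
  unfolding u_def w_def by (rule aux[OF assms(1) assms(2)])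

end
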